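(* Let $\|\cdot\|$ be a strictly convex norm on $\mathbb{R}^n$ that is continuously differentiable on $\mathbb{R}^n\setminus\{0\}$, let $N(x)$ denote its gradient at $x\ne 0$, and set $h(x,y)=\|y\|-\langle y,N(x)\rangle$ for $x\neq0$, $y\in\mathbb{R}^n$. Suppose that there are constants $r>0$ and $\Lambda>2$ such that $$\Lambda\, h(x,x+y)\le h(x,x+2y)\quad\text{for all } x\neq 0 \text{ and } \|y\|\le r\|x\|.$$ Then $$\Big(3-\frac{2}{\Lambda}\Big)h(x,x+y)\le h(x,x+2y)\quad\text{for all } x\neq 0\text{ and }\|y\|\le 2r\|x\|.$$
   Context: $\langle\cdot,\cdot\rangle$ is the Euclidean inner product. Strict convexity of the norm means: if $x,y\neq0$ and $\|x+y\|=\|x\|+\|y\|$, then $y=\alpha x$ for some $\alpha>0$. *)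

theory Defs
  imports "HOL-Analysis.Analysis"
begin

definition is_norm :: "(real^'n \<Rightarrow> real) \<Rightarrow> bool" where
  "is_norm nrm \<longleftrightarrow>
     (\<forall>x. 0 \<le> nrm x) \<and> (\<forall>x. nrm x = 0 \<longleftrightarrow> x = 0) \<and>
     (\<forall>c x. nrm (c *\<^sub>R x) = \<bar>c\<bar> * nrm x) \<and>
     (\<forall>x y. nrm (x + y) \<le> nrm x + nrm y)"

definition strictly_convex_norm :: "(real^'n \<Rightarrow> real) \<Rightarrow> bool" where
  "strictly_convex_norm nrm \<longleftrightarrow>
     (\<forall>x y. x \<noteq> 0 \<longrightarrow> y \<noteq> 0 \<longrightarrow> nrm (x + y) = nrm x + nrm y \<longrightarrow>
        (\<exists>\<alpha>>0. y = \<alpha> *\<^sub>R x))"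

definition C1_gradient :: "(real^'n \<Rightarrow> real) \<Rightarrow> (real^'n \<Rightarrow> real^'n) \<Rightarrow> bool" where
  "C1_gradient nrm N \<longleftrightarrow>
     (\<forall>x. x \<noteq> 0 \<longrightarrow> (nrm has_derivative (\<lambda>v. v \<bullet> N x)) (at x)) \<and>
     continuous_on (- {0}) N"

definition hfun :: "(real^'n \<Rightarrow> real) \<Rightarrow> (real^'n \<Rightarrow> real^'n) \<Rightarrow> real^'n \<Rightarrow> real^'n \<Rightarrow> real" where
  "hfun nrm N x y = nrm y - y \<bullet> N x"

end

theory Submission
  imports Defs
begin

theorem lemma4p4:
  fixes nrm :: "real^'n \<Rightarrow> real" and N :: "real^'n \<Rightarrow> real^'n"
    and r \<Lambda> :: real
  assumes "is_norm nrm"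
    and "strictly_convex_norm nrm"
    and "C1_gradient nrm N"
    and "r > 0" and "\<Lambda> > 2"
    and "\<forall>x y. x \<noteq> 0 \<longrightarrow> nrm y \<le> r * nrm x \<longrightarrow>
           \<Lambda> * hfun nrm N x (x + y) \<le> hfun nrm N x (x + 2 *\<^sub>R y)"
  shows "\<forall>x y. x \<noteq> 0 \<longrightarrow> nrm y \<le> 2 * r * nrm x \<longrightarrow>
           (3 - 2 / \<Lambda>) * hfun nrm N x (x + y) \<le> hfun nrm N x (x + 2 *\<^sub>R y)"
proof (intro allI impI)
  fix x y :: "real^'n"
  assume x: "x \<noteq> 0" and ny: "nrm y \<le> 2 * r * nrm x"
  have hom: "\<And>c v. nrm (c *\<^sub>R v) = \<bar>c\<bar> * nrm v" and tri: "\<And>a b. nrm (a + b) \<le> nrm a + nrm b"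
    using assms(1) unfolding is_norm_def by auto
  have "nrm ((1/2) *\<^sub>R y) = nrm y / 2" using hom[of "1/2" y] by simp
  hence "nrm ((1/2) *\<^sub>R y) \<le> r * nrm x" using ny by simp
  have H: "\<Lambda> * hfun nrm N x (x + (1/2) *\<^sub>R y) \<le> hfun nrm N x (x + y)"
  proof -
    have "2 *\<^sub>R ((1/2) *\<^sub>R y) = y" by simp
    thus ?thesis using assms(6) x \<open>nrm ((1/2) *\<^sub>R y) \<le> r * nrm x\<close> by metis
  qed
  have eq: "x + y = (2/3) *\<^sub>R (x + (1/2) *\<^sub>R y) + (1/3) *\<^sub>R (x + 2 *\<^sub>R y)"
    by (simp add: vec_eq_iff field_simps)
  have "nrm (x + y) \<le> nrm ((2/3) *\<^sub>R (x + (1/2) *\<^sub>R y)) + nrm ((1/3) *\<^sub>R (x + 2 *\<^sub>R y))"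
    using tri eq by metis
  hence C: "nrm (x + y) \<le> (2/3) * nrm (x + (1/2) *\<^sub>R y) + (1/3) * nrm (x + 2 *\<^sub>R y)"
    using hom by simp
  have L: "(x + y) \<bullet> N x = (2/3) * ((x + (1/2) *\<^sub>R y) \<bullet> N x) + (1/3) * ((x + 2 *\<^sub>R y) \<bullet> N x)"
    by (simp add: algebra_simps inner_add_left)
  have C2: "hfun nrm N x (x + y) \<le> (2/3) * hfun nrm N x (x + (1/2) *\<^sub>R y) + (1/3) * hfun nrm N x (x + 2 *\<^sub>R y)"
    unfolding hfun_def right_diff_distrib using C L by linarith
  have lp: "\<Lambda> > 0" using assms(5) by simp
  have "hfun nrm N x (x + (1/2) *\<^sub>R y) \<le> hfun nrm N x (x + y) / \<Lambda>"
    using H lp by (simp add: field_simps mult.commute)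
  hence "hfun nrm N x (x + y) \<le> (2/3) * (hfun nrm N x (x + y) / \<Lambda>) + (1/3) * hfun nrm N x (x + 2 *\<^sub>R y)"
    using C2 by linarith
  thus "(3 - 2 / \<Lambda>) * hfun nrm N x (x + y) \<le> hfun nrm N x (x + 2 *\<^sub>R y)"
    by (simp add: algebra_simps)
qed

end
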